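(* Let $a,b,c\in\mathbb{R}$ and let $(u(\tau),v(\tau),w(\tau))$ be a solution, with $u,v,w$ pairwise distinct, of $$u'=\frac{c}{u-v}+\frac{b}{u-w},\quad v'=\frac{a}{v-w}+\frac{c}{v-u},\quad w'=\frac{b}{w-u}+\frac{a}{w-v}.$$ Set $\zeta=\frac{1}{\sqrt3}(u+v+w)$, $\eta=\frac{1}{\sqrt2}(u-v)$, $\xi=\frac1{\sqrt6}(u+v-2w)$. Then $\zeta$ is constant along the solution and $$\eta'=\frac{c}{\eta}+\frac{b}{\sqrt3\,\xi+\eta}-\frac{a}{\sqrt3\,\xi-\eta},\qquad \xi'=\sqrt3\Big(\frac{b}{\sqrt3\,\xi+\eta}+\frac{a}{\sqrt3\,\xi-\eta}\Big).$$ Moreover this planar system is a gradient system: $(\eta',\xi')=(\partial_\eta \tilde F,\partial_\xi \tilde F)$ with $\tilde F(\eta,\xi)=c\ln|\eta|+b\ln|\sqrt3\,\xi+\eta|+a\ln|\sqrt3\,\xi-\eta|$.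
   Context: Prime denotes derivative with respect to the (real) time variable $\tau$. *)

theory Defs
  imports "HOL-Analysis.Analysis"
begin

definition Ftilde :: "real \<Rightarrow> real \<Rightarrow> real \<Rightarrow> real \<Rightarrow> real \<Rightarrow> real" where
  "Ftilde a b c e x = c * ln \<bar>e\<bar> + b * ln \<bar>sqrt 3 * x + e\<bar> + a * ln \<bar>sqrt 3 * x - e\<bar>"

end

theory Submission
  imports Defs
begin

lemma ln_abs_sq: "ln \<bar>y::real\<bar> = ln (y*y) / 2"
proof (cases "y = 0")
  case False
  have "y*y = \<bar>y\<bar>*\<bar>y\<bar>" by simp
  hence "ln (y*y) = ln (\<bar>y\<bar>*\<bar>y\<bar>)" by (rule arg_cong)
  also have "\<dots> = 2 * ln \<bar>y\<bar>" using False by (simp only: ln_mult[of "\<bar>y\<bar>" "\<bar>y\<bar>"] zero_less_abs_iff) simp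
  finally show ?thesis by simp
qed simp

lemma ln_abs_deriv: "(x::real) \<noteq> 0 \<Longrightarrow> ((\<lambda>y. ln \<bar>y\<bar>) has_real_derivative 1/x) (at x)"
proof -
  assume x: "x \<noteq> 0"
  have "x*x > 0" using x by (auto simp: zero_less_mult_iff linorder_neq_iff)
  have "((\<lambda>y. ln (y*y) / 2) has_real_derivative ((1 / (x*x)) * (x + x)) / 2) (at x)"
    using \<open>x*x>0\<close> by (auto intro!: derivative_eq_intros)
  moreover have "((1 / (x*x)) * (x + x)) / 2 = 1/x" using x by (simp add: field_simps)
  ultimately show ?thesis by (simp add: ln_abs_sq)
qed

lemma A1: fixes sa p q r a b c :: real assumes "sa > 0" "sa * sa = 2" "p\<noteq>0" "q\<noteq>0" "r\<noteq>0"
 shows "(c/p + b/q - (a/r + - (c/p)))/sa = c/(p/sa) + b/(sa * q) - a/(sa * r)"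
  using assms by (simp add: field_simps)
lemma A2: fixes sa ta p q r a b c :: real assumes "sa > 0" "sa * sa = 2" "ta>0" "ta * ta=3" "p\<noteq>0" "q\<noteq>0" "r\<noteq>0"
 shows "(c/p + b/q + (a/r + - (c/p)) - 2 * (-(b/q) + - (a/r)))/(sa * ta) = ta * (b/(sa * q) + a/(sa * r))"
proof -
  have "(c/p + b/q + (a/r + - (c/p)) - 2 * (-(b/q) + - (a/r))) = 3 * (b/q + a/r)" by simp
  also have "3 = ta * ta" using assms by simp
  finally show ?thesis using assms by (simp add: field_simps)
qed

lemma flip: "x / (q - p) = - (x / (p - q))" for x p q :: real
  by (metis minus_diff_eq divide_minus_right)

lemma E1: "c * (1 / e) + b * (1 / X * 1) + a * (1 / Y * -1) = c / e + b / X - a / (Y::real)" by simp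
lemma E2: "0 + b * (1 / X * sqrt 3) + a * (1 / Y * sqrt 3) = sqrt 3 * (b / X + a / (Y::real))" by (simp add: algebra_simps)
lemma Z0: "c/(u-v) + b/(u-w) + (a/(v-w) + c/(v-u)) + (b/(w-u) + a/(w-v)) = (0::real)"
  unfolding flip[of c v u] flip[of b w u] flip[of a w v] by simp

theorem mainTheorem4:
  fixes a b c :: real and u v w :: "real \<Rightarrow> real" and I :: "real set"
  assumes I: "open I" "is_interval I"
    and distinct: "\<And>t. t \<in> I \<Longrightarrow> u t \<noteq> v t \<and> v t \<noteq> w t \<and> u t \<noteq> w t"
    and du: "\<And>t. t \<in> I \<Longrightarrow> (u has_real_derivative (c / (u t - v t) + b / (u t - w t))) (at t)"
    and dv: "\<And>t. t \<in> I \<Longrightarrow> (v has_real_derivative (a / (v t - w t) + c / (v t - u t))) (at t)"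
    and dw: "\<And>t. t \<in> I \<Longrightarrow> (w has_real_derivative (b / (w t - u t) + a / (w t - v t))) (at t)"
  defines "\<zeta> \<equiv> (\<lambda>t. (u t + v t + w t) / sqrt 3)"
    and "\<eta> \<equiv> (\<lambda>t. (u t - v t) / sqrt 2)"
    and "\<xi> \<equiv> (\<lambda>t. (u t + v t - 2 * w t) / sqrt 6)"
  shows "(\<forall>s\<in>I. \<forall>t\<in>I. \<zeta> s = \<zeta> t)
    \<and> (\<forall>t\<in>I.
         (\<eta> has_real_derivative
            (c / \<eta> t + b / (sqrt 3 * \<xi> t + \<eta> t) - a / (sqrt 3 * \<xi> t - \<eta> t))) (at t)
       \<and> (\<xi> has_real_derivative
            (sqrt 3 * (b / (sqrt 3 * \<xi> t + \<eta> t) + a / (sqrt 3 * \<xi> t - \<eta> t)))) (at t))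
    \<and> (\<forall>t\<in>I.
         ((\<lambda>e. Ftilde a b c e (\<xi> t)) has_real_derivative
            (c / \<eta> t + b / (sqrt 3 * \<xi> t + \<eta> t) - a / (sqrt 3 * \<xi> t - \<eta> t))) (at (\<eta> t))
       \<and> ((\<lambda>x. Ftilde a b c (\<eta> t) x) has_real_derivative
            (sqrt 3 * (b / (sqrt 3 * \<xi> t + \<eta> t) + a / (sqrt 3 * \<xi> t - \<eta> t)))) (at (\<xi> t)))"
proof -
  have s6: "sqrt 6 = sqrt 2 * sqrt 3" by (simp add: real_sqrt_mult[symmetric])
  have s2: "sqrt 2 > 0" "sqrt 3 > 0" by auto
  have s22: "sqrt 2 * sqrt 2 = 2" "sqrt 3 * sqrt 3 = 3" "sqrt 2 * (sqrt 2 * x) = 2 * x" "sqrt 3 * (sqrt 3 * x) = 3 * x" for x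
    by (simp_all add: mult.assoc[symmetric])
  have P: "sqrt 3 * \<xi> t + \<eta> t = sqrt 2 * (u t - w t)" for t
  proof -
    have "sqrt 3 * \<xi> t = (u t + v t - 2 * w t) / sqrt 2" unfolding \<xi>_def s6 using s2 by simp
    hence "sqrt 3 * \<xi> t + \<eta> t = 2 * (u t - w t) / sqrt 2" unfolding \<eta>_def by (simp add: field_simps)
    also have "\<dots> = sqrt 2 * (u t - w t)" using s2 s22 by (simp add: field_simps)
    finally show ?thesis .
  qed
  have M: "sqrt 3 * \<xi> t - \<eta> t = sqrt 2 * (v t - w t)" for t
  proof -
    have "sqrt 3 * \<xi> t = (u t + v t - 2 * w t) / sqrt 2" unfolding \<xi>_def s6 using s2 by simp
    hence "sqrt 3 * \<xi> t - \<eta> t = 2 * (v t - w t) / sqrt 2" unfolding \<eta>_def by (simp add: field_simps)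
    also have "\<dots> = sqrt 2 * (v t - w t)" using s2 s22 by (simp add: field_simps)
    finally show ?thesis .
  qed
  have Z: "\<exists>k. \<forall>t\<in>I. \<zeta> t = k"
  proof (rule has_field_derivative_zero_constant)
    show "convex I" using I(2) by (simp add: is_interval_convex)
    fix t assume t: "t \<in> I"
    have "(\<zeta> has_real_derivative ((c / (u t - v t) + b / (u t - w t)) + (a / (v t - w t) + c / (v t - u t))
        + (b / (w t - u t) + a / (w t - v t))) / sqrt 3) (at t)"
      unfolding \<zeta>_def by (rule DERIV_cdivide[OF DERIV_add[OF DERIV_add[OF du[OF t] dv[OF t]] dw[OF t]]])
    moreover have "((c / (u t - v t) + b / (u t - w t)) + (a / (v t - w t) + c / (v t - u t))
        + (b / (w t - u t) + a / (w t - v t))) = 0"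
      by (rule Z0)
    ultimately have "(\<zeta> has_real_derivative 0 / sqrt 3) (at t)" by metis
    thus "(\<zeta> has_real_derivative 0) (at t within I)"
      by (simp add: has_field_derivative_at_within)
  qed
  have D: "(\<eta> has_real_derivative
            (c / \<eta> t + b / (sqrt 3 * \<xi> t + \<eta> t) - a / (sqrt 3 * \<xi> t - \<eta> t))) (at t)
       \<and> (\<xi> has_real_derivative
            (sqrt 3 * (b / (sqrt 3 * \<xi> t + \<eta> t) + a / (sqrt 3 * \<xi> t - \<eta> t)))) (at t)"
    if t: "t \<in> I" for t
  proof
    have "(\<eta> has_real_derivative ((c / (u t - v t) + b / (u t - w t)) - (a / (v t - w t) + c / (v t - u t))) / sqrt 2) (at t)"
      unfolding \<eta>_def by (rule DERIV_cdivide[OF DERIV_diff[OF du[OF t] dv[OF t]]])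
    moreover have "((c / (u t - v t) + b / (u t - w t)) - (a / (v t - w t) + c / (v t - u t))) / sqrt 2
       = c / \<eta> t + b / (sqrt 3 * \<xi> t + \<eta> t) - a / (sqrt 3 * \<xi> t - \<eta> t)"
      unfolding P M unfolding \<eta>_def flip[of c "v t" "u t"]
      by (rule A1) (use distinct[OF t] s2 s22 in auto)
    ultimately show "(\<eta> has_real_derivative
            (c / \<eta> t + b / (sqrt 3 * \<xi> t + \<eta> t) - a / (sqrt 3 * \<xi> t - \<eta> t))) (at t)" by simp
    have "(\<xi> has_real_derivative ((c / (u t - v t) + b / (u t - w t)) + (a / (v t - w t) + c / (v t - u t))
        - 2 * (b / (w t - u t) + a / (w t - v t))) / sqrt 6) (at t)"
      unfolding \<xi>_def by (rule DERIV_cdivide[OF DERIV_diff[OF DERIV_add[OF du[OF t] dv[OF t]] DERIV_cmult[OF dw[OF t]]]])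
    moreover have "((c / (u t - v t) + b / (u t - w t)) + (a / (v t - w t) + c / (v t - u t))
        - 2 * (b / (w t - u t) + a / (w t - v t))) / sqrt 6
       = sqrt 3 * (b / (sqrt 3 * \<xi> t + \<eta> t) + a / (sqrt 3 * \<xi> t - \<eta> t))"
      unfolding P M s6 flip[of c "v t" "u t"] flip[of b "w t" "u t"] flip[of a "w t" "v t"]
      by (rule A2) (use distinct[OF t] s2 s22 in auto)
    ultimately show "(\<xi> has_real_derivative
            (sqrt 3 * (b / (sqrt 3 * \<xi> t + \<eta> t) + a / (sqrt 3 * \<xi> t - \<eta> t)))) (at t)" by simp
  qed
  have G: "((\<lambda>e. Ftilde a b c e (\<xi> t)) has_real_derivative
            (c / \<eta> t + b / (sqrt 3 * \<xi> t + \<eta> t) - a / (sqrt 3 * \<xi> t - \<eta> t))) (at (\<eta> t))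
       \<and> ((\<lambda>x. Ftilde a b c (\<eta> t) x) has_real_derivative
            (sqrt 3 * (b / (sqrt 3 * \<xi> t + \<eta> t) + a / (sqrt 3 * \<xi> t - \<eta> t)))) (at (\<xi> t))"
    if t: "t \<in> I" for t
  proof -
    have n1: "\<eta> t \<noteq> 0" using distinct[OF t] s2 unfolding \<eta>_def by simp
    have n2: "sqrt 3 * \<xi> t + \<eta> t \<noteq> 0" using distinct[OF t] s2 unfolding P by simp
    have n3: "sqrt 3 * \<xi> t - \<eta> t \<noteq> 0" using distinct[OF t] s2 unfolding M by simp
    have i1: "((\<lambda>e. sqrt 3 * \<xi> t + e) has_real_derivative 1) (at (\<eta> t))"
      by (auto intro!: derivative_eq_intros)
    have i2: "((\<lambda>e. sqrt 3 * \<xi> t - e) has_real_derivative -1) (at (\<eta> t))"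
      by (auto intro!: derivative_eq_intros)
    have j1: "((\<lambda>x. sqrt 3 * x + \<eta> t) has_real_derivative sqrt 3) (at (\<xi> t))"
      by (auto intro!: derivative_eq_intros)
    have j2: "((\<lambda>x. sqrt 3 * x - \<eta> t) has_real_derivative sqrt 3) (at (\<xi> t))"
      by (auto intro!: derivative_eq_intros)
    have H1: "((\<lambda>e. Ftilde a b c e (\<xi> t)) has_real_derivative
       c * (1 / \<eta> t) + b * (1 / (sqrt 3 * \<xi> t + \<eta> t) * 1) + a * (1 / (sqrt 3 * \<xi> t - \<eta> t) * -1)) (at (\<eta> t))"
      unfolding Ftilde_def
      by (rule DERIV_add[OF DERIV_add[OF DERIV_cmult[OF ln_abs_deriv[OF n1]]
           DERIV_cmult[OF DERIV_chain2[OF ln_abs_deriv[OF n2] i1]]]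
           DERIV_cmult[OF DERIV_chain2[OF ln_abs_deriv[OF n3] i2]]])
    have H2: "((\<lambda>x. Ftilde a b c (\<eta> t) x) has_real_derivative
       0 + b * (1 / (sqrt 3 * \<xi> t + \<eta> t) * sqrt 3) + a * (1 / (sqrt 3 * \<xi> t - \<eta> t) * sqrt 3)) (at (\<xi> t))"
      unfolding Ftilde_def
      by (rule DERIV_add[OF DERIV_add[OF DERIV_const
           DERIV_cmult[OF DERIV_chain2[OF ln_abs_deriv[OF n2] j1]]]
           DERIV_cmult[OF DERIV_chain2[OF ln_abs_deriv[OF n3] j2]]])
    have e1: "c * (1 / \<eta> t) + b * (1 / (sqrt 3 * \<xi> t + \<eta> t) * 1) + a * (1 / (sqrt 3 * \<xi> t - \<eta> t) * -1)
      = c / \<eta> t + b / (sqrt 3 * \<xi> t + \<eta> t) - a / (sqrt 3 * \<xi> t - \<eta> t)" by (rule E1)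
    have e2: "0 + b * (1 / (sqrt 3 * \<xi> t + \<eta> t) * sqrt 3) + a * (1 / (sqrt 3 * \<xi> t - \<eta> t) * sqrt 3)
      = sqrt 3 * (b / (sqrt 3 * \<xi> t + \<eta> t) + a / (sqrt 3 * \<xi> t - \<eta> t))" by (rule E2)
    show ?thesis using H1 H2 unfolding e1 e2 by (rule conjI)
  qed
  show ?thesis using Z D G by metis
qed

end
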